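(* Let $1\le u\le n$, let $p\ge1$, and let $X\subset\mathbb{Z}^n$ be $c_u$-connected. Let $A,B\subset X$ be finite, nonempty, $c_u$-connected sets. Suppose $H_{(X,c_u)}(A,B)\le m$ for some $m\in\mathbb{N}$. Then $H_p(A,B)\le m\,u^{1/p}$.
   Context: Two distinct points $x=(x_1,\dots,x_n),y=(y_1,\dots,y_n)\in\mathbb{Z}^n$ are $c_u$-adjacent if there are at most $u$ indices $i$ with $|x_i-y_i|=1$ and for all other indices $j$, $x_j=y_j$. A set is $c_u$-connected if any two of its points are joined by a finite sequence of points in the set with consecutive points $c_u$-adjacent. A $c_u$-path in $X$ of length $k$ from $a$ to $b$ is a sequence $a=y_0,\dots,y_k=b$ in $X$ with $y_i,y_{i+1}$ $c_u$-adjacent. $H_{(X,c_u)}(A,B)$ is the least $\varepsilon\ge0$ such that for every $a\in A$ there is $b'\in B$ and a $c_u$-path in $X$ of length $\le\varepsilon$ from $a$ to $b'$, and for every $b\in B$ there is $a'\in A$ and a $c_u$-path in $X$ of length $\le\varepsilon$ from $b$ to $a'$. $d_p(x,y)=\left(\sum_i|x_i-y_i|^p\right)^{1/p}$ and $H_p(A,B)=\min\{\varepsilon\ge0:\forall a\in A\ \exists b\in B,\ d_p(a,b)\le\varepsilon,\ \text{and}\ \forall b\in B\ \exists a\in A,\ d_p(a,b)\le\varepsilon\}$. *)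

theory Defs
  imports "HOL-Analysis.Analysis"
begin

text \<open>Points of Z^n are vectors int ^ 'n, with n = CARD('n).\<close>

definition c_adj :: "nat \<Rightarrow> int ^ 'n \<Rightarrow> int ^ 'n \<Rightarrow> bool" where
  "c_adj u x y \<longleftrightarrow> x \<noteq> y \<and> (\<forall>i. \<bar>x $ i - y $ i\<bar> \<le> 1)
     \<and> card {i. \<bar>x $ i - y $ i\<bar> = 1} \<le> u"

definition c_path :: "(int ^ 'n) set \<Rightarrow> nat \<Rightarrow> nat \<Rightarrow> int ^ 'n \<Rightarrow> int ^ 'n \<Rightarrow> bool" where
  "c_path X u k a b \<longleftrightarrow> (\<exists>y :: nat \<Rightarrow> int ^ 'n. y 0 = a \<and> y k = b
      \<and> (\<forall>i\<le>k. y i \<in> X) \<and> (\<forall>i<k. c_adj u (y i) (y (Suc i))))"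

definition c_connected :: "nat \<Rightarrow> (int ^ 'n) set \<Rightarrow> bool" where
  "c_connected u S \<longleftrightarrow> (\<forall>a\<in>S. \<forall>b\<in>S. \<exists>k. c_path S u k a b)"

definition H_digital :: "(int ^ 'n) set \<Rightarrow> nat \<Rightarrow> (int ^ 'n) set \<Rightarrow> (int ^ 'n) set \<Rightarrow> real" where
  "H_digital X u A B = Inf {\<epsilon>::real. \<epsilon> \<ge> 0 \<and>
      (\<forall>a\<in>A. \<exists>b'\<in>B. \<exists>k. real k \<le> \<epsilon> \<and> c_path X u k a b') \<and>
      (\<forall>b\<in>B. \<exists>a'\<in>A. \<exists>k. real k \<le> \<epsilon> \<and> c_path X u k b a')}"

definition d_p :: "real \<Rightarrow> int ^ 'n \<Rightarrow> int ^ 'n \<Rightarrow> real" where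
  "d_p p x y = (\<Sum>i\<in>UNIV. real_of_int \<bar>x $ i - y $ i\<bar> powr p) powr (1 / p)"

definition H_p :: "real \<Rightarrow> (int ^ 'n) set \<Rightarrow> (int ^ 'n) set \<Rightarrow> real" where
  "H_p p A B = Inf {\<epsilon>::real. \<epsilon> \<ge> 0 \<and>
      (\<forall>a\<in>A. \<exists>b\<in>B. d_p p a b \<le> \<epsilon>) \<and> (\<forall>b\<in>B. \<exists>a\<in>A. d_p p a b \<le> \<epsilon>)}"

end

theory Submission
  imports Defs
begin

lemma adj_bounds:
  fixes x y :: "int ^ 'n"
  assumes "c_adj u x y"
  shows "(\<forall>i. \<bar>x $ i - y $ i\<bar> \<le> 1) \<and> (\<Sum>i\<in>UNIV. \<bar>x $ i - y $ i\<bar>) \<le> int u"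
proof -
  have b: "\<forall>i. \<bar>x $ i - y $ i\<bar> \<le> 1" and c: "card {i. \<bar>x $ i - y $ i\<bar> = 1} \<le> u"
    using assms unfolding c_adj_def by auto
  have "(\<Sum>i\<in>UNIV. \<bar>x $ i - y $ i\<bar>) = (\<Sum>i\<in>{i. \<bar>x $ i - y $ i\<bar> = 1}. \<bar>x $ i - y $ i\<bar>)"
  proof (rule sum.mono_neutral_right)
    show "\<forall>i\<in>UNIV - {i. \<bar>x $ i - y $ i\<bar> = 1}. \<bar>x $ i - y $ i\<bar> = 0"
    proof
      fix i assume "i \<in> UNIV - {i. \<bar>x $ i - y $ i\<bar> = 1}"
      then have "\<bar>x $ i - y $ i\<bar> \<noteq> 1" by simp
      moreover have "\<bar>x $ i - y $ i\<bar> \<le> 1" using b by blast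
      ultimately show "\<bar>x $ i - y $ i\<bar> = 0" by linarith
    qed
  qed auto
  also have "\<dots> = (\<Sum>i\<in>{i. \<bar>x $ i - y $ i\<bar> = 1}. (1::int))" by (rule sum.cong) auto
  also have "\<dots> = int (card {i. \<bar>x $ i - y $ i\<bar> = 1})" by simp
  finally show ?thesis using b c by simp
qed

lemma path_bounds:
  fixes a b :: "int ^ 'n"
  assumes "c_path X u k a b"
  shows "(\<forall>i. \<bar>a $ i - b $ i\<bar> \<le> int k) \<and> (\<Sum>i\<in>UNIV. \<bar>a $ i - b $ i\<bar>) \<le> int k * int u"
proof -
  obtain y :: "nat \<Rightarrow> int ^ 'n" where y: "y 0 = a" "y k = b" "\<forall>i<k. c_adj u (y i) (y (Suc i))"
    using assms unfolding c_path_def by blast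
  have "j \<le> k \<Longrightarrow> (\<forall>i. \<bar>y 0 $ i - y j $ i\<bar> \<le> int j) \<and> (\<Sum>i\<in>UNIV. \<bar>y 0 $ i - y j $ i\<bar>) \<le> int j * int u" for j
  proof (induction j)
    case 0
    then show ?case by simp
  next
    case (Suc j)
    then have IH: "\<forall>i. \<bar>y 0 $ i - y j $ i\<bar> \<le> int j" "(\<Sum>i\<in>UNIV. \<bar>y 0 $ i - y j $ i\<bar>) \<le> int j * int u"
      by auto
    have A: "\<forall>i. \<bar>y j $ i - y (Suc j) $ i\<bar> \<le> 1" "(\<Sum>i\<in>UNIV. \<bar>y j $ i - y (Suc j) $ i\<bar>) \<le> int u"
      using adj_bounds[of u "y j" "y (Suc j)"] y(3) Suc.prems by auto
    have tri: "\<bar>y 0 $ i - y (Suc j) $ i\<bar> \<le> \<bar>y 0 $ i - y j $ i\<bar> + \<bar>y j $ i - y (Suc j) $ i\<bar>" for i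
      by linarith
    have "(\<Sum>i\<in>UNIV. \<bar>y 0 $ i - y (Suc j) $ i\<bar>) \<le> (\<Sum>i\<in>UNIV. \<bar>y 0 $ i - y j $ i\<bar> + \<bar>y j $ i - y (Suc j) $ i\<bar>)"
      by (rule sum_mono, rule tri)
    also have "\<dots> \<le> int j * int u + int u" using IH(2) A(2) by (simp add: sum.distrib)
    finally have s: "(\<Sum>i\<in>UNIV. \<bar>y 0 $ i - y (Suc j) $ i\<bar>) \<le> int (Suc j) * int u"
      by (simp add: algebra_simps)
    have "\<forall>i. \<bar>y 0 $ i - y (Suc j) $ i\<bar> \<le> int (Suc j)"
    proof
      fix i
      have "\<bar>y 0 $ i - y j $ i\<bar> \<le> int j" "\<bar>y j $ i - y (Suc j) $ i\<bar> \<le> 1"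
        using IH(1) A(1) by blast+
      then show "\<bar>y 0 $ i - y (Suc j) $ i\<bar> \<le> int (Suc j)" using tri[of i] by simp
    qed
    with s show ?case by blast
  qed
  from this[of k] y show ?thesis by simp
qed

lemma path_dp:
  fixes a b :: "int ^ 'n"
  assumes "c_path X u k a b" and "p \<ge> 1" and "u \<ge> 1"
  shows "d_p p a b \<le> real k * real u powr (1 / p)"
proof -
  define t where "t i = real_of_int \<bar>a $ i - b $ i\<bar>" for i
  from path_bounds[OF assms(1)] have
    i1: "\<forall>i. \<bar>a $ i - b $ i\<bar> \<le> int k" and i2: "(\<Sum>i\<in>UNIV. \<bar>a $ i - b $ i\<bar>) \<le> int k * int u"
    by blast+
  have t1: "\<forall>i. t i \<le> real k"
  proof
    fix i
    have "real_of_int \<bar>a $ i - b $ i\<bar> \<le> real_of_int (int k)" using i1 of_int_le_iff by blast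
    then show "t i \<le> real k" unfolding t_def by simp
  qed
  have "(\<Sum>i\<in>UNIV. t i) = real_of_int (\<Sum>i\<in>UNIV. \<bar>a $ i - b $ i\<bar>)"
    unfolding t_def by (rule of_int_sum[symmetric])
  also have "\<dots> \<le> real_of_int (int k * int u)" using i2 of_int_le_iff by blast
  also have "\<dots> = real k * real u" by simp
  finally have t2: "(\<Sum>i\<in>UNIV. t i) \<le> real k * real u" .
  have t0: "\<forall>i. t i \<ge> 0" unfolding t_def by simp
  have dpt: "d_p p a b = (\<Sum>i\<in>UNIV. t i powr p) powr (1 / p)" unfolding d_p_def t_def by (rule refl)
  show ?thesis
  proof (cases "k = 0")
    case True
    have "\<forall>i. t i = 0"
    proof
      fix i
      have "t i \<le> 0" "0 \<le> t i" using t1 t0 True by auto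
      then show "t i = 0" by linarith
    qed
    then have "d_p p a b = 0" unfolding dpt by simp
    then show ?thesis using True by simp
  next
    case False
    have each: "t i powr p \<le> real k powr (p - 1) * t i" for i
    proof (cases "t i = 0")
      case True then show ?thesis by simp
    next
      case False
      then have pos: "t i > 0" using t0 by (simp add: order_less_le)
      have "t i powr p = t i powr ((p - 1) + 1)" by simp
      also have "\<dots> = t i powr (p - 1) * t i powr 1" by (rule powr_add)
      also have "\<dots> = t i powr (p - 1) * t i" using pos by simp
      finally have "t i powr p = t i powr (p - 1) * t i" .
      also have "\<dots> \<le> real k powr (p - 1) * t i"
        using pos t1 assms(2) by (intro mult_right_mono powr_mono2) auto
      finally show ?thesis .
    qed
    have "(\<Sum>i\<in>UNIV. t i powr p) \<le> (\<Sum>i\<in>UNIV. real k powr (p - 1) * t i)"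
      by (rule sum_mono, rule each)
    also have "\<dots> = real k powr (p - 1) * (\<Sum>i\<in>UNIV. t i)" by (simp add: sum_distrib_left)
    also have "\<dots> \<le> real k powr (p - 1) * (real k * real u)" using t2 by (simp add: mult_left_mono)
    also have "\<dots> = (real k powr (p - 1) * real k powr 1) * real u"
      using False by simp
    also have "\<dots> = real k powr p * real u"
      by (simp only: powr_add[symmetric]) simp
    finally have S: "(\<Sum>i\<in>UNIV. t i powr p) \<le> real k powr p * real u" .
    have "d_p p a b = (\<Sum>i\<in>UNIV. t i powr p) powr (1 / p)" by (rule dpt)
    also have "\<dots> \<le> (real k powr p * real u) powr (1 / p)"
      using S assms(2) by (intro powr_mono2) (auto intro: sum_nonneg)
    also have "\<dots> = real k * real u powr (1 / p)"
      using assms(2) by (simp add: powr_mult powr_powr)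
    finally show ?thesis .
  qed
qed

theorem theorem3p4:
  fixes X A B :: "(int ^ 'n) set" and u m :: nat and p :: real
  assumes "1 \<le> u" and "u \<le> CARD('n)" and "p \<ge> 1"
    and "c_connected u X"
    and "A \<subseteq> X" and "B \<subseteq> X"
    and "finite A" and "finite B" and "A \<noteq> {}" and "B \<noteq> {}"
    and "c_connected u A" and "c_connected u B"
    and "H_digital X u A B \<le> real m"
  shows "H_p p A B \<le> real m * real u powr (1 / p)"
proof -
  let ?S = "{\<epsilon>::real. \<epsilon> \<ge> 0 \<and>
      (\<forall>a\<in>A. \<exists>b'\<in>B. \<exists>k. real k \<le> \<epsilon> \<and> c_path X u k a b') \<and>
      (\<forall>b\<in>B. \<exists>a'\<in>A. \<exists>k. real k \<le> \<epsilon> \<and> c_path X u k b a')}"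
  have ex1: "\<exists>k. \<exists>b'\<in>B. c_path X u k a b'" if "a \<in> A" for a
  proof -
    obtain b0 where "b0 \<in> B" using assms(10) by blast
    then show ?thesis using assms(4,5,6) that unfolding c_connected_def by blast
  qed
  have ex2: "\<exists>k. \<exists>a'\<in>A. c_path X u k b a'" if "b \<in> B" for b
  proof -
    obtain a0 where "a0 \<in> A" using assms(9) by blast
    then show ?thesis using assms(4,5,6) that unfolding c_connected_def by blast
  qed
  define ka where "ka a = (LEAST k. \<exists>b'\<in>B. c_path X u k a b')" for a
  define kb where "kb b = (LEAST k. \<exists>a'\<in>A. c_path X u k b a')" for b
  define E where "E = Max (ka ` A \<union> kb ` B)"
  have fin: "finite (ka ` A \<union> kb ` B)" using assms(7,8) by simp
  have "real E \<in> ?S"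
  proof (intro CollectI conjI ballI)
    fix a assume a: "a \<in> A"
    have "\<exists>b'\<in>B. c_path X u (ka a) a b'" unfolding ka_def by (rule LeastI_ex, rule ex1[OF a])
    moreover have "ka a \<le> E" unfolding E_def using fin a by (intro Max_ge) auto
    ultimately show "\<exists>b'\<in>B. \<exists>k. real k \<le> real E \<and> c_path X u k a b'" by auto
  next
    fix b assume b: "b \<in> B"
    have "\<exists>a'\<in>A. c_path X u (kb b) b a'" unfolding kb_def by (rule LeastI_ex, rule ex2[OF b])
    moreover have "kb b \<le> E" unfolding E_def using fin b by (intro Max_ge) auto
    ultimately show "\<exists>a'\<in>A. \<exists>k. real k \<le> real E \<and> c_path X u k b a'" by auto
  qed simp
  then have ne: "?S \<noteq> {}" by blast
  have bdd: "bdd_below ?S" by (rule bdd_belowI[of _ 0]) auto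
  have "Inf ?S < real m + 1/2" using assms(13) unfolding H_digital_def by simp
  then obtain s where s: "s \<in> ?S" "s < real m + 1/2"
    using cInf_lessD[OF ne] by blast
  have sc: "0 \<le> s \<and> (\<forall>a\<in>A. \<exists>b'\<in>B. \<exists>k. real k \<le> s \<and> c_path X u k a b') \<and>
      (\<forall>b\<in>B. \<exists>a'\<in>A. \<exists>k. real k \<le> s \<and> c_path X u k b a')" using s(1) by (rule CollectD)
  have P1: "\<exists>b'\<in>B. \<exists>k. k \<le> m \<and> c_path X u k a b'" if "a \<in> A" for a
  proof -
    have "\<exists>b'\<in>B. \<exists>k. real k \<le> s \<and> c_path X u k a b'" using bspec[OF conjunct1[OF conjunct2[OF sc]] that] .
    then obtain b' where "b' \<in> B" "\<exists>k. real k \<le> s \<and> c_path X u k a b'" by (rule bexE)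
    then obtain k where "real k \<le> s" "c_path X u k a b'" by (elim exE conjE)
    moreover have "k \<le> m"
    proof -
      have "real k < real (Suc m)" using \<open>real k \<le> s\<close> s(2) by simp
      then have "k < Suc m" by (simp only: of_nat_less_iff)
      then show ?thesis by simp
    qed
    ultimately show ?thesis using \<open>b' \<in> B\<close> by blast
  qed
  have P2: "\<exists>a'\<in>A. \<exists>k. k \<le> m \<and> c_path X u k b a'" if "b \<in> B" for b
  proof -
    have "\<exists>a'\<in>A. \<exists>k. real k \<le> s \<and> c_path X u k b a'" using bspec[OF conjunct2[OF conjunct2[OF sc]] that] .
    then obtain a' where "a' \<in> A" "\<exists>k. real k \<le> s \<and> c_path X u k b a'" by (rule bexE)
    then obtain k where "real k \<le> s" "c_path X u k b a'" by (elim exE conjE)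
    moreover have "k \<le> m"
    proof -
      have "real k < real (Suc m)" using \<open>real k \<le> s\<close> s(2) by simp
      then have "k < Suc m" by (simp only: of_nat_less_iff)
      then show ?thesis by simp
    qed
    ultimately show ?thesis using \<open>a' \<in> A\<close> by blast
  qed
  have dpm: "d_p p x y \<le> real m * real u powr (1 / p)" if "c_path X u k x y" "k \<le> m" for x y k
  proof -
    have "d_p p x y \<le> real k * real u powr (1 / p)"
      using path_dp[OF that(1) assms(3)] assms(1) by simp
    also have "\<dots> \<le> real m * real u powr (1 / p)"
      using that(2) by (intro mult_right_mono) auto
    finally show ?thesis .
  qed
  have sym: "d_p p x y = d_p p y x" for x y :: "int ^ 'n"
    unfolding d_p_def by (simp add: abs_minus_commute)
  let ?T = "{\<epsilon>::real. \<epsilon> \<ge> 0 \<and>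
      (\<forall>a\<in>A. \<exists>b\<in>B. d_p p a b \<le> \<epsilon>) \<and> (\<forall>b\<in>B. \<exists>a\<in>A. d_p p a b \<le> \<epsilon>)}"
  have "real m * real u powr (1 / p) \<in> ?T"
  proof (intro CollectI conjI ballI)
    fix a assume "a \<in> A"
    then show "\<exists>b\<in>B. d_p p a b \<le> real m * real u powr (1 / p)" using P1 dpm by blast
  next
    fix b assume "b \<in> B"
    then show "\<exists>a\<in>A. d_p p a b \<le> real m * real u powr (1 / p)" using P2 dpm sym by metis
  qed simp
  moreover have "bdd_below ?T" by (rule bdd_belowI[of _ 0]) auto
  ultimately show ?thesis unfolding H_p_def by (rule cInf_lower)
qed

end
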